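(* Let $m,n\ge2$ and $W$ a channel from $\{1,\dots,m\}$ to $\{1,\dots,n\}$. (i) If $m\le n$, define for each $j$: $\beta'_j=\frac{(\mathbf{1}W)_j-1}{\mathrm{w}(W_{*,j})-1}$ if $\mathrm{w}(W_{*,j})>1$ and $\beta'_j=0$ otherwise, and $\beta=\max(0,\max_j\beta'_j)$. Then $\overline{P}_W(m)\le 1-\beta$, and if $\beta=0$ then $\overline{P}_W(m)=1$. (ii) If $m\ge n$, let $h=\min(1,\min_{1\le j\le n}(\mathbf{1}W)_j)$. Then $\overline{P}_W(n)\le h$, and if $h=1$ then $\overline{P}_W(n)=1$.
   Context: A channel is a row-stochastic matrix; $\mathcal{D}$ is the set of deterministic (0-1) channels from $\{1,\dots,m\}$ to $\{1,\dots,n\}$, $\mathrm{rank}(D)$ the matrix rank. $\Lambda(W)=\{\lambda\text{ probability distribution on }\mathcal{D}: W=\sum_D\lambda_DD\}$, $P_\lambda(r)=\lambda(\{D:\mathrm{rank}(D)=r\})$, $\overline{P}_W(r)=\max_{\lambda\in\Lambda(W)}P_\lambda(r)$. $\mathbf{1}$ is the all-one row vector of length $m$ ($\mathbf{1}W$ = column sums), $W_{*,j}$ is the $j$-th column, and $\mathrm{w}(x)$ is the number of nonzero entries of $x$. *)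

theory Defs
  imports "HOL-Analysis.Analysis"
begin

text \<open>Matrices are real^'n^'m: rows indexed by the finite type 'm (inputs 1..m),
columns by 'n (outputs 1..n).  W $ i $ j is the (i,j) entry.\<close>

definition channel :: "real^'n^'m \<Rightarrow> bool" where
  "channel W \<longleftrightarrow> (\<forall>i j. W $ i $ j \<ge> 0) \<and> (\<forall>i. (\<Sum>j\<in>UNIV. W $ i $ j) = 1)"

definition det_channels :: "(real^'n^'m) set" where
  "det_channels = {D. channel D \<and> (\<forall>i j. D $ i $ j = 0 \<or> D $ i $ j = 1)}"

definition decomps :: "real^'n^'m \<Rightarrow> (real^'n^'m \<Rightarrow> real) set" where
  "decomps W = {lam. (\<forall>D. lam D \<ge> 0) \<and> (\<forall>D. D \<notin> det_channels \<longrightarrow> lam D = 0)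
     \<and> (\<Sum>D\<in>det_channels. lam D) = 1
     \<and> W = (\<Sum>D\<in>det_channels. lam D *\<^sub>R D)}"

definition P_rank :: "(real^'n^'m \<Rightarrow> real) \<Rightarrow> nat \<Rightarrow> real" where
  "P_rank lam r = (\<Sum>D\<in>{D\<in>det_channels. rank D = r}. lam D)"

definition P_max :: "real^'n^'m \<Rightarrow> nat \<Rightarrow> real" where
  "P_max W r = Sup ((\<lambda>lam. P_rank lam r) ` decomps W)"

definition col_sum :: "real^'n^'m \<Rightarrow> 'n \<Rightarrow> real" where
  "col_sum W j = (\<Sum>i\<in>UNIV. W $ i $ j)"

definition col_weight :: "real^'n^'m \<Rightarrow> 'n \<Rightarrow> nat" where
  "col_weight W j = card {i. W $ i $ j \<noteq> 0}"

definition beta' :: "real^'n^'m \<Rightarrow> 'n \<Rightarrow> real" where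
  "beta' W j = (if col_weight W j > 1
      then (col_sum W j - 1) / (real (col_weight W j) - 1) else 0)"

definition beta :: "real^'n^'m \<Rightarrow> real" where
  "beta W = max 0 (Max (range (beta' W)))"

definition hval :: "real^'n^'m \<Rightarrow> real" where
  "hval W = min 1 (Min (range (col_sum W)))"

end

theory Submission
  imports Defs
begin


lemma hom_sys:
  fixes c :: "'q \<Rightarrow> 'e \<Rightarrow> real"
  assumes "finite Q" "finite E" "card Q < card E"
  shows "\<exists>x. (\<forall>e. e \<notin> E \<longrightarrow> x e = 0) \<and> (\<exists>e\<in>E. x e \<noteq> 0)
             \<and> (\<forall>q\<in>Q. (\<Sum>e\<in>E. c q e * x e) = 0)"
  using assms
proof (induction Q arbitrary: E c rule: finite_induct)
  case empty
  then obtain e0 where "e0 \<in> E" by fastforce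
  then show ?case by (intro exI[of _ "\<lambda>e. if e = e0 then 1 else 0"]) auto
next
  case (insert q Q)
  show ?case
  proof (cases "\<forall>e\<in>E. c q e = 0")
    case True
    from insert.IH[of E c] insert.prems insert.hyps obtain x where
      x: "\<forall>e. e \<notin> E \<longrightarrow> x e = 0" "\<exists>e\<in>E. x e \<noteq> 0" "\<forall>q\<in>Q. (\<Sum>e\<in>E. c q e * x e) = 0"
      by auto
    then show ?thesis using True by (intro exI[of _ x]) auto
  next
    case False
    then obtain e0 where e0: "e0 \<in> E" "c q e0 \<noteq> 0" by auto
    define E' where "E' = E - {e0}"
    define c' where "c' = (\<lambda>q' e. c q' e - c q' e0 * c q e / c q e0)"
    have fE': "finite E'" using insert.prems E'_def by auto
    have cE': "card Q < card E'" using insert.prems insert.hyps e0 E'_def by auto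
    from insert.IH[OF fE' cE', of c'] obtain x' where
      x': "\<forall>e. e \<notin> E' \<longrightarrow> x' e = 0" "\<exists>e\<in>E'. x' e \<noteq> 0" "\<forall>q'\<in>Q. (\<Sum>e\<in>E'. c' q' e * x' e) = 0"
      by auto
    define v where "v = - (\<Sum>e\<in>E'. c q e * x' e) / c q e0"
    define x where "x = x'(e0 := v)"
    have split: "(\<Sum>e\<in>E. g e * x e) = g e0 * v + (\<Sum>e\<in>E'. g e * x' e)" for g
    proof -
      have "E = insert e0 E'" using e0 E'_def by auto
      moreover have "e0 \<notin> E'" using E'_def by auto
      ultimately have "(\<Sum>e\<in>E. g e * x e) = g e0 * x e0 + (\<Sum>e\<in>E'. g e * x e)"
        using fE' by simp
      also have "(\<Sum>e\<in>E'. g e * x e) = (\<Sum>e\<in>E'. g e * x' e)"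
        using \<open>e0 \<notin> E'\<close> x_def by (intro sum.cong) auto
      finally show ?thesis using x_def by simp
    qed
    have "(\<Sum>e\<in>E. c q e * x e) = 0"
      unfolding split using e0 v_def by (simp add: field_simps)
    moreover have "(\<Sum>e\<in>E. c q' e * x e) = 0" if "q' \<in> Q" for q'
    proof -
      have "0 = (\<Sum>e\<in>E'. c' q' e * x' e)" using x' that by auto
      also have "\<dots> = (\<Sum>e\<in>E'. c q' e * x' e) - c q' e0 / c q e0 * (\<Sum>e\<in>E'. c q e * x' e)"
        unfolding c'_def by (simp add: algebra_simps sum_subtractf sum_distrib_left)
      also have "\<dots> = (\<Sum>e\<in>E'. c q' e * x' e) + c q' e0 * v"
        unfolding v_def by simp
      finally show ?thesis unfolding split by simp
    qed
    moreover have "\<forall>e. e \<notin> E \<longrightarrow> x e = 0" using x' e0 E'_def x_def by auto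
    moreover have "\<exists>e\<in>E. x e \<noteq> 0" using x' E'_def x_def by auto
    ultimately show ?thesis by (intro exI[of _ x]) auto
  qed
qed

lemma int_frac: "(x::real) \<in> \<int> \<Longrightarrow> 0 < x \<Longrightarrow> x < 1 \<Longrightarrow> False"
proof -
  assume "x \<in> \<int>" "0 < x" "x < 1"
  then obtain k where "x = of_int k" by (auto elim: Ints_cases)
  with \<open>0 < x\<close> \<open>x < 1\<close> have "0 < k" "k < 1" by auto
  then show False by simp
qed

lemma two_frac:
  fixes g :: "'a \<Rightarrow> real"
  assumes "finite A" "\<forall>j\<in>A. 0 \<le> g j \<and> g j \<le> 1" "(\<Sum>j\<in>A. g j) \<in> \<int>" "j0 \<in> A" "0 < g j0" "g j0 < 1"
  shows "\<exists>j\<in>A. j \<noteq> j0 \<and> 0 < g j \<and> g j < 1"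
proof (rule ccontr)
  assume H: "\<not> ?thesis"
  have "\<forall>j\<in>A-{j0}. g j \<in> \<int>"
  proof
    fix j assume "j \<in> A - {j0}"
    with H assms(2) have "g j = 0 \<or> g j = 1" by force
    then show "g j \<in> \<int>" by auto
  qed
  then have r: "(\<Sum>j\<in>A-{j0}. g j) \<in> \<int>" by (intro Ints_sum) auto
  have "(\<Sum>j\<in>A. g j) = g j0 + (\<Sum>j\<in>A-{j0}. g j)"
    using assms(1,4) by (simp add: sum.remove)
  then have "g j0 = (\<Sum>j\<in>A. g j) - (\<Sum>j\<in>A-{j0}. g j)" by simp
  then have "g j0 \<in> \<int>" using r assms(3) by (metis Ints_diff)
  then show False using int_frac assms(5,6) by blast
qed

definition rsum :: "('m::finite \<Rightarrow> 'n::finite \<Rightarrow> real) \<Rightarrow> 'm \<Rightarrow> real" where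
  "rsum X i = (\<Sum>j\<in>UNIV. X i j)"
definition csum :: "('m::finite \<Rightarrow> 'n::finite \<Rightarrow> real) \<Rightarrow> 'n \<Rightarrow> real" where
  "csum X j = (\<Sum>i\<in>UNIV. X i j)"
definition feas :: "('n \<Rightarrow> int) \<Rightarrow> ('n \<Rightarrow> int) \<Rightarrow> ('m::finite \<Rightarrow> 'n::finite \<Rightarrow> real) \<Rightarrow> bool" where
  "feas a b X \<longleftrightarrow> (\<forall>i j. 0 \<le> X i j) \<and> (\<forall>i. rsum X i = 1)
      \<and> (\<forall>j. of_int (a j) \<le> csum X j \<and> csum X j \<le> of_int (b j))"
definition fracs :: "('m::finite \<Rightarrow> 'n::finite \<Rightarrow> real) \<Rightarrow> ('m \<times> 'n) set" where
  "fracs X = {(i,j). 0 < X i j \<and> X i j < 1}"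
definition nints :: "('m::finite \<Rightarrow> 'n::finite \<Rightarrow> real) \<Rightarrow> 'n set" where
  "nints X = {j. csum X j \<notin> \<int>}"
definition meas :: "('m::finite \<Rightarrow> 'n::finite \<Rightarrow> real) \<Rightarrow> nat" where
  "meas X = card (fracs X) + card (nints X)"

lemma feas_le1: "feas a b X \<Longrightarrow> X i j \<le> 1"
proof -
  assume F: "feas a b X"
  have "X i j \<le> (\<Sum>j\<in>UNIV. X i j)"
    using F unfolding feas_def by (intro member_le_sum) auto
  then show ?thesis using F unfolding feas_def rsum_def by auto
qed

lemma card_rows: "card (E::('m::finite \<times> 'n::finite) set) = (\<Sum>i\<in>UNIV. card {j. (i,j) \<in> E})"
proof -
  have "E = Sigma UNIV (\<lambda>i. {j. (i,j) \<in> E})" by auto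
  then show ?thesis by (metis card_SigmaI finite)
qed

lemma card_cols: "card (E::('m::finite \<times> 'n::finite) set) = (\<Sum>j\<in>UNIV. card {i. (i,j) \<in> E})"
proof -
  have "card E = card (prod.swap ` E)" by (simp add: card_image)
  also have "\<dots> = (\<Sum>j\<in>UNIV. card {i. (j,i) \<in> prod.swap ` E})" by (rule card_rows)
  also have "\<dots> = (\<Sum>j\<in>UNIV. card {i. (i,j) \<in> E})"
    by (intro sum.cong refl arg_cong[where f=card]) force
  finally show ?thesis .
qed



lemma sum_fst_eq:
  fixes g :: "('m::finite \<times> 'n::finite) \<Rightarrow> real"
  shows "(\<Sum>e\<in>UNIV. if fst e = i then g e else 0) = (\<Sum>j\<in>UNIV. g (i,j))"
proof -
  have "(\<Sum>e\<in>UNIV. if fst e = i then g e else 0) = (\<Sum>e\<in>{i}\<times>UNIV. g e)"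
    by (rule sum.mono_neutral_cong_right) auto
  also have "\<dots> = (\<Sum>j\<in>UNIV. g (i,j))"
  proof -
    have "{i}\<times>(UNIV::'n set) = Pair i ` UNIV" by auto
    then show ?thesis by (simp add: sum.reindex inj_on_def)
  qed
  finally show ?thesis .
qed

lemma sum_snd_eq:
  fixes g :: "('m::finite \<times> 'n::finite) \<Rightarrow> real"
  shows "(\<Sum>e\<in>UNIV. if snd e = j then g e else 0) = (\<Sum>i\<in>UNIV. g (i,j))"
proof -
  have "(\<Sum>e\<in>UNIV. if snd e = j then g e else 0) = (\<Sum>e\<in>UNIV\<times>{j}. g e)"
    by (rule sum.mono_neutral_cong_right) auto
  also have "\<dots> = (\<Sum>i\<in>UNIV. g (i,j))"
  proof -
    have "(UNIV::'m set)\<times>{j} = (\<lambda>i. (i,j)) ` UNIV" by auto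
    then show ?thesis by (simp add: sum.reindex inj_on_def)
  qed
  finally show ?thesis .
qed

lemma card_ge2: "finite A \<Longrightarrow> a \<in> A \<Longrightarrow> b \<in> A \<Longrightarrow> a \<noteq> b \<Longrightarrow> 2 \<le> card A"
  by (metis card_2_iff card_mono empty_subsetI insert_subset)

lemma direction:
  fixes X :: "'m::finite \<Rightarrow> 'n::finite \<Rightarrow> real"
  assumes F: "feas a b X" and N: "meas X > 0"
  shows "\<exists>d. (\<exists>i j. d i j \<noteq> 0) \<and> (\<forall>i j. d i j \<noteq> 0 \<longrightarrow> (i,j) \<in> fracs X)
           \<and> (\<forall>i. rsum d i = 0) \<and> (\<forall>j. csum X j \<in> \<int> \<longrightarrow> csum d j = 0)"
proof -
  define E where "E = fracs X"
  have X01: "\<forall>i j. 0 \<le> X i j \<and> X i j \<le> 1" using F feas_le1 unfolding feas_def by blast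
  have intE: "X i j \<in> \<int>" if "(i,j) \<notin> E" for i j
  proof -
    have "\<not> (0 < X i j \<and> X i j < 1)" using that unfolding E_def fracs_def by auto
    moreover have "0 \<le> X i j" "X i j \<le> 1" using X01 by auto
    ultimately have "X i j = 0 \<or> X i j = 1" by linarith
    then show ?thesis by auto
  qed
  have E_ne: "E \<noteq> {}"
  proof
    assume E0: "E = {}"
    then have "card (nints X) > 0" using N by (simp add: meas_def E_def)
    then obtain j where j: "csum X j \<notin> \<int>" by (auto simp: nints_def card_gt_0_iff)
    have "csum X j \<in> \<int>" unfolding csum_def using intE E0 by (intro Ints_sum) auto
    then show False using j by simp
  qed
  have row_two: "\<exists>j. j \<noteq> j0 \<and> (i,j) \<in> E" if "(i,j0) \<in> E" for i j0
  proof -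
    have "\<exists>j\<in>UNIV. j \<noteq> j0 \<and> 0 < X i j \<and> X i j < 1"
      using that F X01 unfolding E_def fracs_def feas_def rsum_def
      by (intro two_frac) auto
    then show ?thesis unfolding E_def fracs_def by auto
  qed
  have col_two: "\<exists>i. i \<noteq> i0 \<and> (i,j) \<in> E" if "(i0,j) \<in> E" "csum X j \<in> \<int>" for i0 j
  proof -
    have "\<exists>i\<in>UNIV. i \<noteq> i0 \<and> 0 < X i j \<and> X i j < 1"
      using that X01 unfolding E_def fracs_def csum_def
      by (intro two_frac) auto
    then show ?thesis unfolding E_def fracs_def by auto
  qed
  define R where "R = {i. \<exists>j. (i,j) \<in> E}"
  define C where "C = {j. csum X j \<in> \<int> \<and> (\<exists>i. (i,j) \<in> E)}"
  define g where "g = (\<lambda>i. card {j. (i,j) \<in> E})"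
  define h where "h = (\<lambda>j. card {i. (i,j) \<in> E})"
  have cardR: "2 * card R \<le> card E"
  proof -
    have "2 * card R = (\<Sum>i\<in>R. 2)" by simp
    also have "\<dots> \<le> (\<Sum>i\<in>R. g i)"
    proof (rule sum_mono)
      fix i assume "i \<in> R"
      then obtain j0 where j0: "(i,j0) \<in> E" unfolding R_def by auto
      then obtain j where "j \<noteq> j0" "(i,j) \<in> E" using row_two by blast
      then show "2 \<le> g i" unfolding g_def using j0 by (intro card_ge2[of _ j0 j]) auto
    qed
    also have "\<dots> \<le> (\<Sum>i\<in>UNIV. g i)" by (rule sum_mono2) auto
    also have "\<dots> = card E" unfolding g_def by (rule card_rows[symmetric])
    finally show ?thesis .
  qed
  have cardC: "2 * card C + (if \<exists>e\<in>E. snd e \<notin> C then 1 else 0) \<le> card E"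
  proof -
    have "2 * card C = (\<Sum>j\<in>C. 2)" by simp
    also have "\<dots> \<le> (\<Sum>j\<in>C. h j)"
    proof (rule sum_mono)
      fix j assume "j \<in> C"
      then obtain i0 where i0: "(i0,j) \<in> E" "csum X j \<in> \<int>" unfolding C_def by auto
      then obtain i where "i \<noteq> i0" "(i,j) \<in> E" using col_two by blast
      then show "2 \<le> h j" unfolding h_def using i0 by (intro card_ge2[of _ i0 i]) auto
    qed
    finally have 1: "2 * card C \<le> (\<Sum>j\<in>C. h j)" .
    have 2: "(if \<exists>e\<in>E. snd e \<notin> C then 1 else 0) \<le> (\<Sum>j\<in>-C. h j)"
    proof (cases "\<exists>e\<in>E. snd e \<notin> C")
      case True
      then obtain i j where ij: "(i,j) \<in> E" "j \<notin> C" by auto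
      then have "0 < h j" unfolding h_def by (auto simp: card_gt_0_iff)
      then have "1 \<le> h j" by simp
      also have "h j \<le> (\<Sum>j\<in>-C. h j)" using ij by (intro member_le_sum) auto
      finally show ?thesis using True by simp
    qed simp
    have "card E = (\<Sum>j\<in>UNIV. h j)" unfolding h_def by (rule card_cols)
    also have "\<dots> = (\<Sum>j\<in>C. h j) + (\<Sum>j\<in>-C. h j)"
    proof -
      have "(\<Sum>j\<in>C \<union> -C. h j) = (\<Sum>j\<in>C. h j) + (\<Sum>j\<in>-C. h j)"
        by (rule sum.union_disjoint) auto
      then show ?thesis by simp
    qed
    finally show ?thesis using 1 2 by linarith
  qed
  define c where "c = (\<lambda>q (e::'m\<times>'n). case q of Inl i \<Rightarrow> if fst e = i then 1 else 0
                           | Inr j \<Rightarrow> if snd e = j then (1::real) else 0)"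
  have eqrow: "(\<Sum>e\<in>E. c (Inl i) e * x e) = rsum (\<lambda>i j. x (i,j)) i"
    if "\<forall>e. e \<notin> E \<longrightarrow> x e = 0" for x i
  proof -
    have "(\<Sum>e\<in>E. c (Inl i) e * x e) = (\<Sum>e\<in>UNIV. c (Inl i) e * x e)"
      using that by (intro sum.mono_neutral_cong_left) auto
    also have "\<dots> = (\<Sum>e\<in>UNIV. if fst e = i then x e else 0)"
      unfolding c_def by (intro sum.cong) auto
    finally show ?thesis unfolding rsum_def sum_fst_eq .
  qed
  have eqcol: "(\<Sum>e\<in>E. c (Inr j) e * x e) = csum (\<lambda>i j. x (i,j)) j"
    if "\<forall>e. e \<notin> E \<longrightarrow> x e = 0" for x j
  proof -
    have "(\<Sum>e\<in>E. c (Inr j) e * x e) = (\<Sum>e\<in>UNIV. c (Inr j) e * x e)"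
      using that by (intro sum.mono_neutral_cong_left) auto
    also have "\<dots> = (\<Sum>e\<in>UNIV. if snd e = j then x e else 0)"
      unfolding c_def by (intro sum.cong) auto
    finally show ?thesis unfolding csum_def sum_snd_eq .
  qed
  have zrow: "rsum d i = 0" if "i \<notin> R" "\<forall>i j. d i j \<noteq> 0 \<longrightarrow> (i,j) \<in> E" for d i
    using that unfolding rsum_def R_def by (intro sum.neutral) auto
  have zcol: "csum d j = 0" if "\<forall>i. (i,j) \<notin> E" "\<forall>i j. d i j \<noteq> 0 \<longrightarrow> (i,j) \<in> E" for d j
    using that unfolding csum_def by (intro sum.neutral) auto
  have injl: "inj_on Inl A" "inj_on Inr B" for A B by (auto simp: inj_on_def)
  show ?thesis
  proof (cases "\<exists>e\<in>E. snd e \<notin> C")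
    case True
    define Q where "Q = Inl ` R \<union> Inr ` C"
    have "card Q = card R + card C" unfolding Q_def
      by (subst card_Un_disjoint) (auto simp: card_image injl)
    then have "card Q < card E" using cardR cardC True by simp
    then obtain x where x: "\<forall>e. e \<notin> E \<longrightarrow> x e = 0" "\<exists>e\<in>E. x e \<noteq> 0"
        "\<forall>q\<in>Q. (\<Sum>e\<in>E. c q e * x e) = 0"
      using hom_sys[of Q E c] by auto
    define d where "d = (\<lambda>i j. x (i,j))"
    have supp: "\<forall>i j. d i j \<noteq> 0 \<longrightarrow> (i,j) \<in> E" using x(1) d_def by auto
    have "\<exists>i j. d i j \<noteq> 0" using x(2) d_def by auto
    moreover have "rsum d i = 0" for i
    proof (cases "i \<in> R")
      case True
      then show ?thesis using x(3) eqrow[OF x(1), of i] unfolding Q_def d_def by auto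
    qed (rule zrow[OF _ supp])
    moreover have "csum d j = 0" if "csum X j \<in> \<int>" for j
    proof (cases "\<forall>i. (i,j) \<notin> E")
      case False
      then have "j \<in> C" using that C_def by auto
      then show ?thesis using x(3) eqcol[OF x(1), of j] unfolding Q_def d_def by auto
    qed (rule zcol[OF _ supp])
    ultimately show ?thesis using supp unfolding E_def by blast
  next
    case False
    obtain e0 where e0: "e0 \<in> E" using E_ne by auto
    define j0 where "j0 = snd e0"
    have j0C: "j0 \<in> C" using False e0 j0_def by auto
    define Q where "Q = Inl ` R \<union> Inr ` (C - {j0})"
    have "card Q = card R + card (C - {j0})" unfolding Q_def
      by (subst card_Un_disjoint) (auto simp: card_image injl)
    also have "card (C - {j0}) = card C - 1" using j0C by simp
    finally have cq: "card Q = card R + (card C - 1)" .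
    have "0 < card C" using j0C by (auto simp: card_gt_0_iff)
    then have "card Q < card E" using cardR cardC False cq by simp
    then obtain x where x: "\<forall>e. e \<notin> E \<longrightarrow> x e = 0" "\<exists>e\<in>E. x e \<noteq> 0"
        "\<forall>q\<in>Q. (\<Sum>e\<in>E. c q e * x e) = 0"
      using hom_sys[of Q E c] by auto
    define d where "d = (\<lambda>i j. x (i,j))"
    have supp: "\<forall>i j. d i j \<noteq> 0 \<longrightarrow> (i,j) \<in> E" using x(1) d_def by auto
    have rows: "rsum d i = 0" for i
    proof (cases "i \<in> R")
      case True
      then show ?thesis using x(3) eqrow[OF x(1), of i] unfolding Q_def d_def by auto
    qed (rule zrow[OF _ supp])
    have cols: "csum d j = 0" if "j \<noteq> j0" for j
    proof (cases "\<forall>i. (i,j) \<notin> E")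
      case F2: False
      then obtain i where "(i,j) \<in> E" by auto
      then have "j \<in> C" using False by force
      then show ?thesis using that x(3) eqcol[OF x(1), of j] unfolding Q_def d_def by auto
    qed (rule zcol[OF _ supp])
    have "(\<Sum>j\<in>UNIV. csum d j) = (\<Sum>i\<in>UNIV. rsum d i)"
      unfolding csum_def rsum_def by (rule sum.swap)
    also have "\<dots> = 0" using rows by simp
    finally have tot: "(\<Sum>j\<in>UNIV. csum d j) = 0" .
    have "(\<Sum>j\<in>UNIV. csum d j) = csum d j0 + (\<Sum>j\<in>UNIV-{j0}. csum d j)"
      by (simp add: sum.remove)
    also have "(\<Sum>j\<in>UNIV-{j0}. csum d j) = 0" using cols by (intro sum.neutral) auto
    finally have "csum d j0 = 0" using tot by simp
    then have "csum d j = 0" for j using cols by (cases "j = j0") auto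
    moreover have "\<exists>i j. d i j \<noteq> 0" using x(2) d_def by auto
    ultimately show ?thesis using supp rows unfolding E_def by blast
  qed
qed



lemma not_int_ceil: "(x::real) \<notin> \<int> \<Longrightarrow> x < of_int \<lceil>x\<rceil>"
  by (metis Ints_of_int le_of_int_ceiling order_le_less)

lemma not_int_floor: "(x::real) \<notin> \<int> \<Longrightarrow> of_int \<lfloor>x\<rfloor> < x"
  by (metis Ints_of_int of_int_floor_le order_le_less)

lemma step:
  fixes X d :: "'m::finite \<Rightarrow> 'n::finite \<Rightarrow> real"
  assumes F: "feas a b X"
    and nz: "\<exists>i j. d i j \<noteq> 0" and supp: "\<forall>i j. d i j \<noteq> 0 \<longrightarrow> (i,j) \<in> fracs X"
    and rs: "\<forall>i. rsum d i = 0" and cs: "\<forall>j. csum X j \<in> \<int> \<longrightarrow> csum d j = 0"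
  shows "\<exists>t>0. feas a b (\<lambda>i j. X i j + t * d i j) \<and> meas (\<lambda>i j. X i j + t * d i j) < meas X"
proof -
  have X01: "\<forall>i j. 0 \<le> X i j \<and> X i j \<le> 1" using F feas_le1 unfolding feas_def by blast
  have fr: "0 < X i j \<and> X i j < 1" if "d i j \<noteq> 0" for i j
    using supp that unfolding fracs_def by auto
  have ni: "csum X j \<notin> \<int>" if "csum d j \<noteq> 0" for j using cs that by auto
  define P where "P = {p. d (fst p) (snd p) > 0}"
  define M where "M = {p. d (fst p) (snd p) < 0}"
  define CP where "CP = {j. csum d j > 0}"
  define CM where "CM = {j. csum d j < 0}"
  define S where "S = (\<lambda>p. (1 - X (fst p) (snd p)) / d (fst p) (snd p)) ` P
     \<union> (\<lambda>p. X (fst p) (snd p) / (- d (fst p) (snd p))) ` M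
     \<union> (\<lambda>j. (of_int \<lceil>csum X j\<rceil> - csum X j) / csum d j) ` CP
     \<union> (\<lambda>j. (csum X j - of_int \<lfloor>csum X j\<rfloor>) / (- csum d j)) ` CM"
  have finS: "finite S" unfolding S_def by auto
  have neS: "S \<noteq> {}"
  proof -
    obtain i j where "d i j \<noteq> 0" using nz by auto
    then have "(i,j) \<in> P \<or> (i,j) \<in> M" unfolding P_def M_def by auto
    then show ?thesis unfolding S_def by auto
  qed
  have posS: "\<forall>s\<in>S. 0 < s"
  proof
    fix s assume "s \<in> S"
    then consider (p) p where "p \<in> P" "s = (1 - X (fst p) (snd p)) / d (fst p) (snd p)"
      | (m) p where "p \<in> M" "s = X (fst p) (snd p) / (- d (fst p) (snd p))"
      | (cp) j where "j \<in> CP" "s = (of_int \<lceil>csum X j\<rceil> - csum X j) / csum d j"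
      | (cm) j where "j \<in> CM" "s = (csum X j - of_int \<lfloor>csum X j\<rfloor>) / (- csum d j)"
      unfolding S_def by blast
    then show "0 < s"
    proof cases
      case p then show ?thesis using fr[of "fst p" "snd p"] unfolding P_def by auto
    next
      case m then show ?thesis using fr[of "fst p" "snd p"] unfolding M_def by (auto simp: divide_pos_neg)
    next
      case cp then show ?thesis using not_int_ceil[OF ni[of j]] unfolding CP_def by auto
    next
      case cm then show ?thesis using not_int_floor[OF ni[of j]] unfolding CM_def by (auto simp: divide_pos_neg)
    qed
  qed
  define t where "t = Min S"
  have tS: "t \<in> S" unfolding t_def using finS neS by (rule Min_in)
  have tle: "t \<le> s" if "s \<in> S" for s unfolding t_def using finS that by (rule Min_le)
  have tpos: "0 < t" using tS posS by auto
  define X' where "X' = (\<lambda>i j. X i j + t * d i j)"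
  have rsX': "rsum X' i = rsum X i + t * rsum d i" for i
    unfolding X'_def rsum_def by (simp add: sum.distrib sum_distrib_left)
  have csX': "csum X' j = csum X j + t * csum d j" for j
    unfolding X'_def csum_def by (simp add: sum.distrib sum_distrib_left)
  have ent: "0 \<le> X' i j" for i j
  proof (cases "d i j < 0")
    case True
    then have "(i,j) \<in> M" unfolding M_def by simp
    have "X i j / (- d i j) \<in> S" unfolding S_def
      by (rule UnI1[OF UnI1[OF UnI2[OF image_eqI[where x="(i,j)"]]]]) (use True in \<open>auto simp: M_def\<close>)
    then have "t \<le> X i j / (- d i j)" using tle by blast
    then have "t * (- d i j) \<le> X i j / (- d i j) * (- d i j)"
      using True by (intro mult_right_mono) auto
    also have "\<dots> = X i j" using True by simp
    finally have "t * (- d i j) \<le> X i j" .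
    then show ?thesis unfolding X'_def by simp
  next
    case False
    then show ?thesis using X01 tpos unfolding X'_def by simp
  qed
  have colb: "of_int (a j) \<le> csum X' j \<and> csum X' j \<le> of_int (b j)" for j
  proof -
    have ab: "of_int (a j) \<le> csum X j" "csum X j \<le> of_int (b j)" using F unfolding feas_def by auto
    consider "csum d j > 0" | "csum d j < 0" | "csum d j = 0" by linarith
    then show ?thesis
    proof cases
      case 1
      then have "j \<in> CP" unfolding CP_def by simp
      have "(of_int \<lceil>csum X j\<rceil> - csum X j) / csum d j \<in> S" unfolding S_def
        by (rule UnI1[OF UnI2[OF image_eqI[where x=j]]]) (use 1 in \<open>auto simp: CP_def\<close>)
      then have "t \<le> (of_int \<lceil>csum X j\<rceil> - csum X j) / csum d j" using tle by blast
      then have "t * csum d j \<le> of_int \<lceil>csum X j\<rceil> - csum X j" using 1 by (simp add: pos_le_divide_eq)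
      moreover have "\<lceil>csum X j\<rceil> \<le> b j" using ab by (simp add: ceiling_le_iff)
      moreover have "real_of_int \<lceil>csum X j\<rceil> \<le> of_int (b j)"
        using \<open>\<lceil>csum X j\<rceil> \<le> b j\<close> by linarith
      moreover have "0 \<le> t * csum d j" using 1 tpos by simp
      ultimately show ?thesis using ab csX'[of j] by linarith
    next
      case 2
      then have "j \<in> CM" unfolding CM_def by simp
      have "(csum X j - of_int \<lfloor>csum X j\<rfloor>) / (- csum d j) \<in> S" unfolding S_def
        by (rule UnI2[OF image_eqI[where x=j]]) (use 2 in \<open>auto simp: CM_def\<close>)
      then have "t \<le> (csum X j - of_int \<lfloor>csum X j\<rfloor>) / (- csum d j)" using tle by blast
      then have "t * (- csum d j) \<le> (csum X j - of_int \<lfloor>csum X j\<rfloor>) / (- csum d j) * (- csum d j)"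
        using 2 by (intro mult_right_mono) auto
      also have "\<dots> = csum X j - of_int \<lfloor>csum X j\<rfloor>" using 2 by simp
      finally have "t * (- csum d j) \<le> csum X j - of_int \<lfloor>csum X j\<rfloor>" .
      moreover have "a j \<le> \<lfloor>csum X j\<rfloor>" using ab by (simp add: le_floor_iff)
      moreover have "of_int (a j) \<le> real_of_int \<lfloor>csum X j\<rfloor>"
        using \<open>a j \<le> \<lfloor>csum X j\<rfloor>\<close> by linarith
      moreover have "t * csum d j \<le> 0" using 2 tpos by (simp add: mult_pos_neg less_imp_le)
      ultimately show ?thesis using ab csX'[of j] by linarith
    next
      case 3 then show ?thesis using ab csX'[of j] by simp
    qed
  qed
  have feas': "feas a b X'" unfolding feas_def using ent colb rsX' rs F unfolding feas_def by auto
  have sub1: "fracs X' \<subseteq> fracs X"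
  proof
    fix p assume "p \<in> fracs X'"
    then obtain i j where p: "p = (i,j)" "0 < X' i j" "X' i j < 1" unfolding fracs_def by auto
    show "p \<in> fracs X"
    proof (cases "d i j = 0")
      case True then show ?thesis using p unfolding X'_def fracs_def by auto
    next
      case False then show ?thesis using supp p by auto
    qed
  qed
  have sub2: "nints X' \<subseteq> nints X"
  proof
    fix j assume j: "j \<in> nints X'"
    show "j \<in> nints X"
    proof (rule ccontr)
      assume "j \<notin> nints X"
      then have "csum X j \<in> \<int>" unfolding nints_def by simp
      then have "csum X' j = csum X j" using cs csX'[of j] by simp
      then show False using j \<open>csum X j \<in> \<int>\<close> unfolding nints_def by simp
    qed
  qed
  have strict: "fracs X' \<noteq> fracs X \<or> nints X' \<noteq> nints X"
  proof -
    consider (p) p where "p \<in> P" "t = (1 - X (fst p) (snd p)) / d (fst p) (snd p)"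
      | (m) p where "p \<in> M" "t = X (fst p) (snd p) / (- d (fst p) (snd p))"
      | (cp) j where "j \<in> CP" "t = (of_int \<lceil>csum X j\<rceil> - csum X j) / csum d j"
      | (cm) j where "j \<in> CM" "t = (csum X j - of_int \<lfloor>csum X j\<rfloor>) / (- csum d j)"
      using tS unfolding S_def by blast
    then show ?thesis
    proof cases
      case p
      obtain i j where ij: "p = (i,j)" by fastforce
      have dp: "d i j > 0" using p ij unfolding P_def by auto
      have "X' i j = 1" using p ij dp unfolding X'_def by (simp add: field_simps)
      moreover have "(i,j) \<in> fracs X" using supp dp by auto
      ultimately have "(i,j) \<notin> fracs X'" "(i,j) \<in> fracs X" unfolding fracs_def by auto
      then show ?thesis by blast
    next
      case m
      obtain i j where ij: "p = (i,j)" by fastforce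
      have dp: "d i j < 0" using m ij unfolding M_def by auto
      have "X' i j = 0" using m ij dp unfolding X'_def by (simp add: field_simps)
      moreover have "(i,j) \<in> fracs X" using supp dp by auto
      ultimately have "(i,j) \<notin> fracs X'" "(i,j) \<in> fracs X" unfolding fracs_def by auto
      then show ?thesis by blast
    next
      case cp
      have dp: "csum d j > 0" using cp unfolding CP_def by auto
      have "csum X' j = of_int \<lceil>csum X j\<rceil>" using cp dp csX'[of j] by (simp add: field_simps)
      then have "j \<notin> nints X'" unfolding nints_def by simp
      moreover have "j \<in> nints X" using ni[of j] dp unfolding nints_def by auto
      ultimately show ?thesis by blast
    next
      case cm
      have dp: "csum d j < 0" using cm unfolding CM_def by auto
      have "csum X' j = of_int \<lfloor>csum X j\<rfloor>" using cm dp csX'[of j] by (simp add: field_simps)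
      then have "j \<notin> nints X'" unfolding nints_def by simp
      moreover have "j \<in> nints X" using ni[of j] dp unfolding nints_def by auto
      ultimately show ?thesis by blast
    qed
  qed
  have "meas X' < meas X"
  proof -
    have c1: "card (fracs X') \<le> card (fracs X)" using sub1 by (intro card_mono) auto
    have c2: "card (nints X') \<le> card (nints X)" using sub2 by (intro card_mono) auto
    from strict show ?thesis
    proof
      assume "fracs X' \<noteq> fracs X"
      then have "card (fracs X') < card (fracs X)" using sub1 by (intro psubset_card_mono) auto
      then show ?thesis using c2 unfolding meas_def by simp
    next
      assume "nints X' \<noteq> nints X"
      then have "card (nints X') < card (nints X)" using sub2 by (intro psubset_card_mono) auto
      then show ?thesis using c1 unfolding meas_def by simp
    qed
  qed
  then show ?thesis using feas' tpos unfolding X'_def by blast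
qed



lemma core:
  fixes X :: "'m::finite \<Rightarrow> 'n::finite \<Rightarrow> real"
  assumes "feas a b X"
  shows "\<exists>\<mu>::('m\<Rightarrow>'n)\<Rightarrow>real. (\<forall>f. 0 \<le> \<mu> f) \<and> sum \<mu> UNIV = 1
     \<and> (\<forall>i j. X i j = sum \<mu> {f. f i = j})
     \<and> (\<forall>f. \<mu> f \<noteq> 0 \<longrightarrow> (\<forall>j. a j \<le> int (card {i. f i = j}) \<and> int (card {i. f i = j}) \<le> b j))"
  using assms
proof (induction "meas X" arbitrary: X rule: less_induct)
  case less
  have X01: "\<forall>i j. 0 \<le> X i j \<and> X i j \<le> 1" using less.prems feas_le1 unfolding feas_def by blast
  show ?case
  proof (cases "meas X = 0")
    case True
    then have fr: "fracs X = {}" by (simp add: meas_def)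
    have e01: "X i j = 0 \<or> X i j = 1" for i j
    proof -
      have "\<not> (0 < X i j \<and> X i j < 1)" using fr unfolding fracs_def by auto
      moreover have "0 \<le> X i j" "X i j \<le> 1" using X01 by auto
      ultimately show ?thesis by linarith
    qed
    have ex1: "\<exists>!j. X i j = 1" for i
    proof -
      have rs: "(\<Sum>j\<in>UNIV. X i j) = 1" using less.prems unfolding feas_def rsum_def by auto
      have "\<exists>j. X i j = 1"
      proof (rule ccontr)
        assume "\<not> ?thesis"
        then have "\<forall>j. X i j = 0" using e01 by blast
        then show False using rs by simp
      qed
      moreover have "j1 = j2" if "X i j1 = 1" "X i j2 = 1" for j1 j2
      proof (rule ccontr)
        assume ne: "j1 \<noteq> j2"
        have "(\<Sum>j\<in>{j1,j2}. X i j) \<le> (\<Sum>j\<in>UNIV. X i j)"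
          using X01 by (intro sum_mono2) auto
        then show False using ne that rs by simp
      qed
      ultimately show ?thesis by blast
    qed
    define f where "f i = (THE j. X i j = 1)" for i
    have fX: "X i (f i) = 1" for i unfolding f_def using ex1[of i] by (rule theI')
    have Xf: "X i j = (if f i = j then 1 else 0)" for i j
      using fX ex1[of i] e01[of i j] by auto
    define \<mu> where "\<mu> = (\<lambda>g::'m\<Rightarrow>'n. if g = f then (1::real) else 0)"
    have "sum \<mu> UNIV = 1" unfolding \<mu>_def by simp
    moreover have "X i j = sum \<mu> {g. g i = j}" for i j
      unfolding \<mu>_def Xf by (simp add: sum.delta)
    moreover have "a j \<le> int (card {i. f i = j}) \<and> int (card {i. f i = j}) \<le> b j" for j
    proof -
      have "csum X j = (\<Sum>i\<in>UNIV. if f i = j then 1 else 0)" unfolding csum_def Xf ..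
      also have "\<dots> = real (card {i. f i = j})" by (simp add: sum.If_cases)
      finally have ce: "csum X j = real (card {i. f i = j})" .
      have "of_int (a j) \<le> csum X j \<and> csum X j \<le> of_int (b j)"
        using less.prems unfolding feas_def by blast
      then have "real_of_int (a j) \<le> real_of_int (int (card {i. f i = j}))"
          "real_of_int (int (card {i. f i = j})) \<le> real_of_int (b j)"
        unfolding ce by simp_all
      then show ?thesis by (simp only: of_int_le_iff)
    qed
    ultimately show ?thesis unfolding \<mu>_def by (intro exI[of _ \<mu>]) (auto simp: \<mu>_def)
  next
    case False
    then have mpos: "meas X > 0" by simp
    obtain d where d: "\<exists>i j. d i j \<noteq> 0" "\<forall>i j. d i j \<noteq> 0 \<longrightarrow> (i,j) \<in> fracs X"
         "\<forall>i. rsum d i = 0" "\<forall>j. csum X j \<in> \<int> \<longrightarrow> csum d j = 0"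
      using direction[OF less.prems mpos] by blast
    obtain t1 where t1: "t1 > 0" "feas a b (\<lambda>i j. X i j + t1 * d i j)"
        "meas (\<lambda>i j. X i j + t1 * d i j) < meas X"
      using step[OF less.prems d] by blast
    define d' where "d' = (\<lambda>i j. - d i j)"
    have d': "\<exists>i j. d' i j \<noteq> 0" "\<forall>i j. d' i j \<noteq> 0 \<longrightarrow> (i,j) \<in> fracs X"
         "\<forall>i. rsum d' i = 0" "\<forall>j. csum X j \<in> \<int> \<longrightarrow> csum d' j = 0"
      using d unfolding d'_def rsum_def csum_def by (auto simp: sum_negf)
    obtain t2 where t2: "t2 > 0" "feas a b (\<lambda>i j. X i j + t2 * d' i j)"
        "meas (\<lambda>i j. X i j + t2 * d' i j) < meas X"
      using step[OF less.prems d'] by blast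
    obtain \<mu>1 where m1: "\<forall>f. 0 \<le> \<mu>1 f" "sum \<mu>1 UNIV = 1"
       "\<forall>i j. X i j + t1 * d i j = sum \<mu>1 {f. f i = j}"
       "\<forall>f. \<mu>1 f \<noteq> 0 \<longrightarrow> (\<forall>j. a j \<le> int (card {i. f i = j}) \<and> int (card {i. f i = j}) \<le> b j)"
      using less.hyps[OF t1(3) t1(2)] by blast
    obtain \<mu>2 where m2: "\<forall>f. 0 \<le> \<mu>2 f" "sum \<mu>2 UNIV = 1"
       "\<forall>i j. X i j + t2 * d' i j = sum \<mu>2 {f. f i = j}"
       "\<forall>f. \<mu>2 f \<noteq> 0 \<longrightarrow> (\<forall>j. a j \<le> int (card {i. f i = j}) \<and> int (card {i. f i = j}) \<le> b j)"
      using less.hyps[OF t2(3) t2(2)] by blast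
    define \<mu> where "\<mu> = (\<lambda>g. (t2 * \<mu>1 g + t1 * \<mu>2 g) / (t1 + t2))"
    have sumA: "sum \<mu> A = (t2 * sum \<mu>1 A + t1 * sum \<mu>2 A) / (t1 + t2)" for A
      unfolding \<mu>_def by (simp add: sum_divide_distrib[symmetric] sum.distrib sum_distrib_left)
    have "\<forall>f. 0 \<le> \<mu> f" unfolding \<mu>_def using m1(1) m2(1) t1(1) t2(1) by simp
    moreover have "sum \<mu> UNIV = 1" unfolding sumA m1(2) m2(2) using t1(1) t2(1) by simp
    moreover have "X i j = sum \<mu> {f. f i = j}" for i j
    proof -
      have "sum \<mu> {f. f i = j} = (t2 * (X i j + t1 * d i j) + t1 * (X i j + t2 * d' i j)) / (t1 + t2)"
        unfolding sumA using m1(3) m2(3) by simp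
      also have "\<dots> = X i j" using t1(1) t2(1) unfolding d'_def by (simp add: field_simps)
      finally show ?thesis by simp
    qed
    moreover have "\<forall>f. \<mu> f \<noteq> 0 \<longrightarrow> (\<forall>j. a j \<le> int (card {i. f i = j}) \<and> int (card {i. f i = j}) \<le> b j)"
    proof (rule allI, rule impI)
      fix f assume "\<mu> f \<noteq> 0"
      then have "\<mu>1 f \<noteq> 0 \<or> \<mu>2 f \<noteq> 0" unfolding \<mu>_def by auto
      then show "\<forall>j. a j \<le> int (card {i. f i = j}) \<and> int (card {i. f i = j}) \<le> b j"
        using m1(4) m2(4) by blast
    qed
    ultimately show ?thesis by blast
  qed
qed



definition fmat :: "('m::finite \<Rightarrow> 'n::finite) \<Rightarrow> real^'n^'m" where
  "fmat f = (\<chi> i j. if f i = j then 1 else 0)"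

lemma fmat_nth: "fmat f $ i $ j = (if f i = j then 1 else 0)"
  unfolding fmat_def by simp

lemma fmat_det: "fmat f \<in> det_channels"
proof -
  have r: "(\<Sum>j\<in>UNIV. fmat f $ i $ j) = 1" for i by (simp add: fmat_nth)
  then show ?thesis by (auto simp: det_channels_def channel_def fmat_nth)
qed

lemma unique_one:
  fixes g :: "'a::finite \<Rightarrow> real"
  assumes "\<forall>j. g j = 0 \<or> g j = 1" "(\<Sum>j\<in>UNIV. g j) = 1"
  shows "\<exists>!j. g j = 1"
proof -
  have "\<exists>j. g j = 1"
  proof (rule ccontr)
    assume "\<not> ?thesis"
    then have "\<forall>j. g j = 0" using assms(1) by blast
    then show False using assms(2) by simp
  qed
  moreover have "j1 = j2" if "g j1 = 1" "g j2 = 1" for j1 j2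
  proof (rule ccontr)
    assume ne: "j1 \<noteq> j2"
    have nn: "0 \<le> g j" for j using assms(1)[rule_format, of j] by auto
    have "(\<Sum>j\<in>{j1,j2}. g j) \<le> (\<Sum>j\<in>UNIV. g j)"
      using nn by (intro sum_mono2) auto
    then show False using ne that assms(2) by simp
  qed
  ultimately show ?thesis by blast
qed

lemma det_fmat: "D \<in> det_channels \<Longrightarrow> \<exists>f. D = fmat f"
proof -
  assume D: "D \<in> det_channels"
  have u: "\<exists>!j. D $ i $ j = 1" for i
    using D unfolding det_channels_def channel_def by (intro unique_one) auto
  define f where "f i = (THE j. D $ i $ j = 1)" for i
  have fD: "D $ i $ (f i) = 1" for i unfolding f_def using u[of i] by (rule theI')
  have "D $ i $ j = (if f i = j then 1 else 0)" for i j
  proof (cases "f i = j")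
    case True then show ?thesis using fD by auto
  next
    case False
    obtain k where k: "\<forall>y. D $ i $ y = 1 \<longrightarrow> y = k" using u[of i] by blast
    have "D $ i $ j \<noteq> 1"
    proof
      assume "D $ i $ j = 1"
      then have "j = k" using k by blast
      moreover have "f i = k" using k fD by blast
      ultimately show False using False by simp
    qed
    then show ?thesis using False D unfolding det_channels_def by auto
  qed
  then have "D = fmat f" by (simp add: vec_eq_iff fmat_nth)
  then show ?thesis by blast
qed

lemma inj_fmat: "inj fmat"
proof (rule injI)
  fix f g :: "'m::finite \<Rightarrow> 'n::finite"
  assume "fmat f = fmat g"
  then have "fmat f $ i $ (f i) = fmat g $ i $ (f i)" for i by simp
  then have "(if g i = f i then 1 else 0::real) = 1" for i unfolding fmat_nth by simp
  then have "g i = f i" for i by (metis zero_neq_one)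
  then show "f = g" by auto
qed

lemma det_range: "det_channels = range fmat"
  using fmat_det det_fmat by blast

lemma sum_det: "(\<Sum>D\<in>det_channels. h D) = (\<Sum>f\<in>UNIV. h (fmat f))"
  unfolding det_range by (simp add: sum.reindex inj_fmat)

lemma sum_det_rank:
  fixes h :: "real^'n::finite^'m::finite \<Rightarrow> real"
  shows "(\<Sum>D\<in>{D\<in>det_channels. rank D = r}. h D) = (\<Sum>f\<in>{f. rank (fmat f) = r}. h (fmat f))"
proof -
  have "{D\<in>(det_channels::(real^'n^'m) set). rank D = r} = fmat ` {f. rank (fmat f) = r}"
    unfolding det_range by auto
  then have "(\<Sum>D\<in>{D\<in>det_channels. rank D = r}. h D) = (\<Sum>D\<in>fmat ` {f. rank (fmat f) = r}. h D)"
    by (simp only:)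
  also have "\<dots> = (\<Sum>f\<in>{f. rank (fmat f) = r}. h (fmat f))"
    by (subst sum.reindex) (auto intro: inj_on_subset[OF inj_fmat])
  finally show ?thesis .
qed

lemma fmat_mult_nth: "(fmat f *v x) $ i = x $ f i"
proof -
  have "(fmat f *v x) $ i = (\<Sum>j\<in>UNIV. fmat f $ i $ j * x $ j)" by (simp add: matrix_vector_mult_def)
  also have "\<dots> = (\<Sum>j\<in>UNIV. if f i = j then x $ j else 0)" by (rule sum.cong) (auto simp: fmat_nth)
  also have "\<dots> = x $ f i" by simp
  finally show ?thesis .
qed

lemma fmat_mult: "fmat f *v x = (\<chi> i. x $ f i)"
  by (simp add: vec_eq_iff fmat_mult_nth)

lemma rank_inj: "rank (fmat (f::'m::finite \<Rightarrow> 'n::finite)) = CARD('m) \<longleftrightarrow> inj f"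
proof -
  have "surj ((*v) (fmat f)) \<longleftrightarrow> inj f"
  proof
    assume s: "surj ((*v) (fmat f))"
    show "inj f"
    proof (rule injI, rule ccontr)
      fix i1 i2 assume e: "f i1 = f i2" and ne: "i1 \<noteq> i2"
      define y :: "real^'m" where "y = (\<chi> i. if i = i1 then 1 else 0)"
      from surjD[OF s, of y] obtain x where "y = fmat f *v x" by blast
      then have "y $ i1 = x $ f i1" "y $ i2 = x $ f i2" unfolding fmat_mult by auto
      then show False using e ne unfolding y_def by simp
    qed
  next
    assume i: "inj f"
    show "surj ((*v) (fmat f))"
    proof (rule surjI)
      fix y :: "real^'m"
      show "fmat f *v (\<chi> j. y $ inv f j) = y"
        unfolding fmat_mult using i by (simp add: vec_eq_iff)
    qed
  qed
  then show ?thesis by (simp add: full_rank_surjective)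
qed

lemma rank_surj: "rank (fmat (f::'m::finite \<Rightarrow> 'n::finite)) = CARD('n) \<longleftrightarrow> surj f"
proof -
  have "inj ((*v) (fmat f)) \<longleftrightarrow> surj f"
  proof
    assume i: "inj ((*v) (fmat f))"
    show "surj f"
    proof (rule ccontr)
      assume "\<not> surj f"
      then obtain j where j: "j \<notin> range f" by blast
      define x :: "real^'n" where "x = (\<chi> k. if k = j then 1 else 0)"
      have h0: "fmat f *v x = fmat f *v 0" unfolding fmat_mult x_def using j
        by (auto simp: vec_eq_iff)
      have "x = 0" using injD[OF i h0] .
      moreover have "x $ j = 1" by (simp add: x_def)
      ultimately show False by simp
    qed
  next
    assume s: "surj f"
    show "inj ((*v) (fmat f))"
    proof (rule injI)
      fix x y :: "real^'n"
      assume "fmat f *v x = fmat f *v y"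
      then have "(fmat f *v x) $ i = (fmat f *v y) $ i" for i by simp
      then have e: "x $ f i = y $ f i" for i by (simp add: fmat_mult_nth)
      have "x $ j = y $ j" for j
      proof -
        from surjD[OF s, of j] obtain i where "j = f i" by blast
        then show "x $ j = y $ j" using e by simp
      qed
      then show "x = y" by (simp add: vec_eq_iff)
    qed
  qed
  then show ?thesis by (simp add: full_rank_injective)
qed



lemma sum_filter_univ: "(\<Sum>f\<in>UNIV. if P f then g f else 0) = sum g {f::'a::finite. P f}"
  using sum.inter_filter[of "UNIV::'a set" g P] by simp

lemma dec_to_mu:
  fixes W :: "real^'n::finite^'m::finite"
  assumes "lam \<in> decomps W"
  shows "(\<forall>f. 0 \<le> lam (fmat f)) \<and> (\<Sum>f\<in>UNIV. lam (fmat f)) = 1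
     \<and> (\<forall>i j. W$i$j = sum (\<lambda>f. lam (fmat f)) {f. f i = j})
     \<and> (\<forall>r. P_rank lam r = sum (\<lambda>f. lam (fmat f)) {f. rank (fmat f) = r})"
proof -
  have L: "\<forall>D. lam D \<ge> 0" "(\<Sum>D\<in>det_channels. lam D) = 1"
      "W = (\<Sum>D\<in>det_channels. lam D *\<^sub>R D)"
    using assms unfolding decomps_def by auto
  have "W$i$j = sum (\<lambda>f. lam (fmat f)) {f. f i = j}" for i j
  proof -
    have "W$i$j = (\<Sum>D\<in>det_channels. lam D * D$i$j)" by (subst L(3)) simp
    also have "\<dots> = (\<Sum>f\<in>UNIV. lam (fmat f) * fmat f $i$j)" by (rule sum_det)
    also have "\<dots> = (\<Sum>f\<in>UNIV. if f i = j then lam (fmat f) else 0)"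
      by (rule sum.cong) (auto simp: fmat_nth)
    finally show ?thesis by (simp add: sum_filter_univ)
  qed
  moreover have "(\<Sum>f\<in>UNIV. lam (fmat f)) = 1" using L(2) sum_det[of lam] by simp
  moreover have "P_rank lam r = sum (\<lambda>f. lam (fmat f)) {f. rank (fmat f) = r}" for r
    unfolding P_rank_def by (rule sum_det_rank)
  ultimately show ?thesis using L(1) by blast
qed

lemma mu_to_dec:
  fixes W :: "real^'n::finite^'m::finite" and \<mu> :: "('m \<Rightarrow> 'n) \<Rightarrow> real"
  assumes "\<forall>f. 0 \<le> \<mu> f" "sum \<mu> UNIV = 1" "\<forall>i j. W$i$j = sum \<mu> {f. f i = j}"
  shows "\<exists>lam\<in>decomps W. \<forall>r. P_rank lam r = sum \<mu> {f. rank (fmat f) = r}"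
proof -
  define lam where "lam D = (if D \<in> det_channels then \<mu> (inv fmat D) else 0)" for D :: "real^'n^'m"
  have lf: "lam (fmat f) = \<mu> f" for f
    unfolding lam_def using fmat_det[of f] inv_f_f[OF inj_fmat, of f] by simp
  have "lam \<in> decomps W"
    unfolding decomps_def
  proof (intro CollectI conjI allI impI)
    show "0 \<le> lam D" for D unfolding lam_def using assms(1) by simp
    show "lam D = 0" if "D \<notin> det_channels" for D using that unfolding lam_def by simp
    show "(\<Sum>D\<in>det_channels. lam D) = 1" unfolding sum_det lf using assms(2) by simp
    have "(\<Sum>D\<in>det_channels. lam D *\<^sub>R D) $ i $ j = W $ i $ j" for i j
    proof -
      have "(\<Sum>D\<in>det_channels. lam D *\<^sub>R D) $ i $ j = (\<Sum>D\<in>det_channels. lam D * D $ i $ j)" by simp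
      also have "\<dots> = (\<Sum>f\<in>UNIV. lam (fmat f) * fmat f $i$j)" by (rule sum_det)
      also have "\<dots> = (\<Sum>f\<in>UNIV. if f i = j then \<mu> f else 0)"
        by (rule sum.cong) (auto simp: fmat_nth lf)
      finally show ?thesis using assms(3) by (simp add: sum_filter_univ)
    qed
    then show "W = (\<Sum>D\<in>det_channels. lam D *\<^sub>R D)" by (simp add: vec_eq_iff)
  qed
  moreover have "P_rank lam r = sum \<mu> {f. rank (fmat f) = r}" for r
    unfolding P_rank_def sum_det_rank lf ..
  ultimately show ?thesis by blast
qed

lemma finite_det: "finite (det_channels :: (real^'n::finite^'m::finite) set)"
  unfolding det_range by simp

lemma Prank_le1: "lam \<in> decomps (W::real^'n::finite^'m::finite) \<Longrightarrow> P_rank lam r \<le> 1"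
proof -
  assume L: "lam \<in> decomps W"
  have "P_rank lam r \<le> (\<Sum>D\<in>det_channels. lam D)"
    unfolding P_rank_def using L finite_det unfolding decomps_def by (intro sum_mono2) auto
  then show ?thesis using L unfolding decomps_def by simp
qed

lemma Pmax_le:
  assumes "decomps (W::real^'n::finite^'m::finite) \<noteq> {}" "\<forall>lam\<in>decomps W. P_rank lam r \<le> B"
  shows "P_max W r \<le> B"
  unfolding P_max_def using assms by (intro cSup_least) auto

lemma Pmax_eq1:
  assumes "lam \<in> decomps (W::real^'n::finite^'m::finite)" "P_rank lam r = 1"
  shows "P_max W r = 1"
  unfolding P_max_def using assms Prank_le1 by (intro cSup_eq_maximum) (auto simp: image_iff)

lemma csum_mu:
  fixes X :: "'m::finite \<Rightarrow> 'n::finite \<Rightarrow> real"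
  assumes "\<forall>i j. X i j = sum \<mu> {f. f i = j}"
  shows "(\<Sum>i\<in>UNIV. X i j) = (\<Sum>f\<in>UNIV. \<mu> f * real (card {i. f i = j}))"
proof -
  have "(\<Sum>i\<in>UNIV. X i j) = (\<Sum>i\<in>UNIV. \<Sum>f\<in>UNIV. if f i = j then \<mu> f else 0)"
    using assms by (simp add: sum_filter_univ)
  also have "\<dots> = (\<Sum>f\<in>UNIV. \<Sum>i\<in>UNIV. if f i = j then \<mu> f else 0)" by (rule sum.swap)
  also have "\<dots> = (\<Sum>f\<in>UNIV. \<mu> f * real (card {i. f i = j}))"
    by (rule sum.cong) (simp_all add: sum_filter_univ)
  finally show ?thesis .
qed



lemma inj_from_card:
  assumes "\<forall>j. int (card {i. f i = j}) \<le> 1"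
  shows "inj (f::'m::finite \<Rightarrow> 'n)"
proof (rule injI)
  fix x y assume e: "f x = f y"
  have "card {i. f i = f x} \<le> Suc 0" using assms[rule_format, of "f x"] by simp
  then have "\<forall>a1\<in>{i. f i = f x}. \<forall>a2\<in>{i. f i = f x}. a1 = a2"
    by (subst card_le_Suc0_iff_eq[symmetric]) auto
  then show "x = y" using e by auto
qed

lemma surj_from_card:
  assumes "\<forall>j. 1 \<le> int (card {i. f i = j})"
  shows "surj (f::'m::finite \<Rightarrow> 'n)"
proof (rule surjI)
  fix j
  have c1: "1 \<le> card {i. f i = j}" using assms[rule_format, of j] by simp
  have "{i. f i = j} \<noteq> {}"
  proof
    assume "{i. f i = j} = {}"
    with c1 show False by simp
  qed
  then obtain i where "f i = j" by auto
  then show "f (SOME i. f i = j) = j" by (rule someI)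
qed

lemma card_inj_le1: "inj (f::'a::finite \<Rightarrow> 'b) \<Longrightarrow> card {i. f i = j} \<le> 1"
proof -
  assume "inj f"
  then have "\<forall>a1\<in>{i. f i = j}. \<forall>a2\<in>{i. f i = j}. a1 = a2" by (auto dest: injD)
  then show ?thesis using card_le_Suc0_iff_eq[of "{i. f i = j}"] by simp
qed

lemma gen_facts:
  fixes W :: "real^'n::finite^'m::finite"
  assumes L: "lam \<in> decomps W"
  shows "0 \<le> lam (fmat f)" and "(\<Sum>f\<in>UNIV. lam (fmat f)) = 1"
    and "col_sum W j = (\<Sum>f\<in>UNIV. lam (fmat f) * real (card {i. f i = j}))"
    and "lam (fmat f) \<noteq> 0 \<Longrightarrow> {i. f i = j} \<subseteq> {i. W $ i $ j \<noteq> 0}"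
    and "P_rank lam r = sum (\<lambda>f. lam (fmat f)) {f. rank (fmat f) = r}"
proof -
  note D = dec_to_mu[OF L]
  have D0: "\<forall>f. 0 \<le> lam (fmat f)" using D by (rule conjunct1)
  have D1: "(\<Sum>f\<in>UNIV. lam (fmat f)) = 1" using D by (elim conjE)
  have D2: "\<forall>i j. W$i$j = sum (\<lambda>f. lam (fmat f)) {f. f i = j}" using D by (elim conjE)
  have D3: "\<forall>r. P_rank lam r = sum (\<lambda>f. lam (fmat f)) {f. rank (fmat f) = r}" using D by (elim conjE)
  show "0 \<le> lam (fmat f)" using D0 by simp
  show "(\<Sum>f\<in>UNIV. lam (fmat f)) = 1" by (rule D1)
  show "P_rank lam r = sum (\<lambda>f. lam (fmat f)) {f. rank (fmat f) = r}" using D3 by simp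
  show "col_sum W j = (\<Sum>f\<in>UNIV. lam (fmat f) * real (card {i. f i = j}))"
    unfolding col_sum_def by (rule csum_mu[of "\<lambda>i j. W $ i $ j"]) (use D2 in simp)
  assume nz: "lam (fmat f) \<noteq> 0"
  show "{i. f i = j} \<subseteq> {i. W $ i $ j \<noteq> 0}"
  proof
    fix i assume "i \<in> {i. f i = j}"
    then have fi: "f \<in> {g. g i = j}" by simp
    have "lam (fmat f) \<le> sum (\<lambda>g. lam (fmat g)) {g. g i = j}"
      using D0 fi by (intro member_le_sum) auto
    moreover have "lam (fmat f) > 0" using D0 nz by (metis order_le_less)
    ultimately show "i \<in> {i. W $ i $ j \<noteq> 0}" using D2 by auto
  qed
qed

theorem proposition9:
  fixes W :: "real^'n^'m"
  assumes "CARD('m) \<ge> 2" and "CARD('n) \<ge> 2" and "channel W"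
  shows "(CARD('m) \<le> CARD('n) \<longrightarrow>
            P_max W CARD('m) \<le> 1 - beta W \<and> (beta W = 0 \<longrightarrow> P_max W CARD('m) = 1))
       \<and> (CARD('m) \<ge> CARD('n) \<longrightarrow>
            P_max W CARD('n) \<le> hval W \<and> (hval W = 1 \<longrightarrow> P_max W CARD('n) = 1))"
proof -
  define X where "X = (\<lambda>i j. W $ i $ j)"
  have nn: "0 \<le> W $ i $ j" for i j using assms(3) unfolding channel_def by auto
  have rs: "(\<Sum>j\<in>UNIV. W $ i $ j) = 1" for i using assms(3) unfolding channel_def by auto
  have le1: "W $ i $ j \<le> 1" for i j
  proof -
    have "W $ i $ j \<le> (\<Sum>j\<in>UNIV. W $ i $ j)" using nn by (intro member_le_sum) auto
    then show ?thesis using rs by simp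
  qed
  have csX: "csum X j = col_sum W j" for j unfolding csum_def col_sum_def X_def ..
  have cs_le_m: "col_sum W j \<le> real CARD('m)" for j
  proof -
    have "col_sum W j \<le> (\<Sum>i\<in>(UNIV::'m set). 1)" unfolding col_sum_def using le1 by (intro sum_mono) auto
    then show ?thesis by simp
  qed
  have feasI: "feas a b X" if "\<forall>j. of_int (a j) \<le> col_sum W j \<and> col_sum W j \<le> of_int (b j)" for a b
    using that nn rs unfolding feas_def rsum_def csX by (auto simp: X_def)
  have decI: "\<exists>lam\<in>decomps W. \<forall>r. P_rank lam r = sum \<mu> {f. rank (fmat f) = r}"
    if "\<forall>f. 0 \<le> \<mu> f" "sum \<mu> UNIV = 1" "\<forall>i j. X i j = sum \<mu> {f. f i = j}" for \<mu>
    using mu_to_dec[of \<mu> W] that unfolding X_def by auto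
  have ne: "decomps W \<noteq> {}"
  proof -
    have "feas (\<lambda>_. 0) (\<lambda>_. int CARD('m)) X" using cs_le_m nn
      by (intro feasI) (auto simp: col_sum_def intro: sum_nonneg)
    from core[OF this] obtain \<mu> :: "('m \<Rightarrow> 'n) \<Rightarrow> real" where
      "\<forall>f. 0 \<le> \<mu> f" "sum \<mu> UNIV = 1" "\<forall>i j. X i j = sum \<mu> {f. f i = j}" by blast
    from decI[OF this] show ?thesis by blast
  qed
  show ?thesis
  proof (intro conjI impI)
    assume mn: "CARD('m) \<le> CARD('n)"
    show "P_max W CARD('m) \<le> 1 - beta W"
    proof (rule Pmax_le[OF ne], rule ballI)
      fix lam assume L: "lam \<in> decomps W"
      define \<mu> where "\<mu> f = lam (fmat f)" for f
      have G0: "0 \<le> \<mu> f" for f unfolding \<mu>_def by (rule gen_facts(1)[OF L])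
      have G1: "sum \<mu> UNIV = 1" unfolding \<mu>_def by (rule gen_facts(2)[OF L])
      have Gc: "col_sum W j = (\<Sum>f\<in>UNIV. \<mu> f * real (card {i. f i = j}))" for j
        unfolding \<mu>_def by (rule gen_facts(3)[OF L])
      have Gs: "{i. f i = j} \<subseteq> {i. W $ i $ j \<noteq> 0}" if "\<mu> f \<noteq> 0" for f j
        using that unfolding \<mu>_def by (rule gen_facts(4)[OF L])
      have Gr: "P_rank lam r = sum \<mu> {f. rank (fmat f) = r}" for r
        unfolding \<mu>_def by (rule gen_facts(5)[OF L])
      define P where "P = sum \<mu> {f. inj f}"
      have PP: "P_rank lam CARD('m) = P"
        unfolding P_def Gr by (simp add: rank_inj)
      have P1: "P \<le> 1" using Prank_le1[OF L, of "CARD('m)"] unfolding PP .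
      have "Max (range (beta' W)) \<in> range (beta' W)" by (rule Max_in) auto
      then obtain j0 where j0: "Max (range (beta' W)) = beta' W j0" by (metis imageE)
      show "P_rank lam CARD('m) \<le> 1 - beta W"
      proof (cases "beta' W j0 \<le> 0")
        case True
        then have "beta W = 0" unfolding beta_def j0 by simp
        then show ?thesis using PP P1 by simp
      next
        case False
        then have bw: "beta W = beta' W j0" unfolding beta_def j0 by simp
        have w1: "col_weight W j0 > 1" using False unfolding beta'_def by (auto split: if_splits)
        define w where "w = real (col_weight W j0)"
        define c where "c = col_sum W j0"
        have bw2: "beta W = (c - 1) / (w - 1)" using bw w1 unfolding beta'_def w_def c_def by simp
        have trm: "\<mu> f * real (card {i. f i = j0}) \<le> \<mu> f * (if inj f then 1 else w)" for f
        proof (cases "\<mu> f = 0")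
          case False
          have "real (card {i. f i = j0}) \<le> (if inj f then 1 else w)"
          proof (cases "inj f")
            case True then show ?thesis using card_inj_le1[OF True, of j0] by simp
          next
            case False
            have "card {i. f i = j0} \<le> col_weight W j0"
              unfolding col_weight_def using Gs[OF \<open>\<mu> f \<noteq> 0\<close>] by (intro card_mono) auto
            then show ?thesis using False unfolding w_def by simp
          qed
          then show ?thesis using G0[of f] by (intro mult_left_mono) auto
        qed simp
        have "c = (\<Sum>f\<in>UNIV. \<mu> f * real (card {i. f i = j0}))" unfolding c_def by (rule Gc)
        also have "\<dots> \<le> (\<Sum>f\<in>UNIV. \<mu> f * (if inj f then 1 else w))" by (rule sum_mono) (rule trm)
        also have "\<dots> = (\<Sum>f\<in>UNIV. (if inj f then \<mu> f else 0)) + w * (\<Sum>f\<in>UNIV. (if inj f then 0 else \<mu> f))"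
        proof -
          have "(\<Sum>f\<in>UNIV. \<mu> f * (if inj f then 1 else w)) =
              (\<Sum>f\<in>UNIV. (if inj f then \<mu> f else 0) + w * (if inj f then 0 else \<mu> f))"
            by (rule sum.cong) auto
          then show ?thesis by (simp add: sum.distrib sum_distrib_left)
        qed
        also have "\<dots> = P + w * (1 - P)"
        proof -
          have "(\<Sum>f\<in>UNIV. (if inj f then \<mu> f else 0)) + (\<Sum>f\<in>UNIV. (if inj f then 0 else \<mu> f)) = sum \<mu> UNIV"
          proof -
            have "(\<Sum>f\<in>UNIV. (if inj f then \<mu> f else 0)) + (\<Sum>f\<in>UNIV. (if inj f then 0 else \<mu> f))
               = (\<Sum>f\<in>UNIV. (if inj f then \<mu> f else 0) + (if inj f then 0 else \<mu> f))"
              by (simp add: sum.distrib)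
            also have "\<dots> = sum \<mu> UNIV" by (rule sum.cong) auto
            finally show ?thesis .
          qed
          then show ?thesis using G1 unfolding P_def sum_filter_univ by simp
        qed
        finally have "c \<le> P + w * (1 - P)" .
        then have "c - 1 \<le> (1 - P) * (w - 1)" by (simp add: algebra_simps)
        moreover have "w - 1 > 0" using w1 unfolding w_def by simp
        ultimately have "(c - 1) / (w - 1) \<le> 1 - P" by (simp add: divide_le_eq)
        then show ?thesis using PP bw2 by simp
      qed
    qed
  next
    assume mn: "CARD('m) \<le> CARD('n)" and b0: "beta W = 0"
    have cle: "col_sum W j \<le> 1" for j
    proof (cases "col_weight W j > 1")
      case True
      have "beta' W j \<le> Max (range (beta' W))" by (intro Max_ge) auto
      also have "\<dots> \<le> beta W" unfolding beta_def by simp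
      finally have "(col_sum W j - 1) / (real (col_weight W j) - 1) \<le> 0"
        using True b0 unfolding beta'_def by simp
      moreover have "real (col_weight W j) - 1 > 0" using True by simp
      ultimately show ?thesis by (simp add: divide_le_0_iff)
    next
      case False
      define S where "S = {i. W $ i $ j \<noteq> 0}"
      have cS: "card S \<le> 1" using False unfolding S_def col_weight_def by simp
      have "col_sum W j = (\<Sum>i\<in>S. W $ i $ j)" unfolding col_sum_def S_def
        by (rule sum.mono_neutral_right) auto
      also have "\<dots> \<le> (\<Sum>i\<in>S. 1)" using le1 by (intro sum_mono) auto
      also have "\<dots> = real (card S)" by simp
      also have "\<dots> \<le> 1" using cS by simp
      finally show ?thesis .
    qed
    have "feas (\<lambda>_. 0) (\<lambda>_. 1) X" using cle nn
      by (intro feasI) (auto simp: col_sum_def intro: sum_nonneg)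
    from core[OF this] obtain \<mu> :: "('m \<Rightarrow> 'n) \<Rightarrow> real" where
      m: "\<forall>f. 0 \<le> \<mu> f" "sum \<mu> UNIV = 1" "\<forall>i j. X i j = sum \<mu> {f. f i = j}"
         "\<forall>f. \<mu> f \<noteq> 0 \<longrightarrow> (\<forall>j. 0 \<le> int (card {i. f i = j}) \<and> int (card {i. f i = j}) \<le> 1)"
      by blast
    from decI[OF m(1-3)] obtain lam where L: "lam \<in> decomps W"
      "\<forall>r. P_rank lam r = sum \<mu> {f. rank (fmat f) = r}" by blast
    have "sum \<mu> {f. rank (fmat f) = CARD('m)} = sum \<mu> UNIV"
    proof (rule sum.mono_neutral_left)
      show "\<forall>f\<in>UNIV - {f. rank (fmat f) = CARD('m)}. \<mu> f = 0"
      proof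
        fix f :: "'m \<Rightarrow> 'n" assume "f \<in> UNIV - {f. rank (fmat f) = CARD('m)}"
        then have nf: "\<not> inj f" using rank_inj[of f] by simp
        show "\<mu> f = 0"
        proof (rule ccontr)
          assume "\<mu> f \<noteq> 0"
          then have "inj f" using m(4) by (intro inj_from_card) auto
          then show False using nf by simp
        qed
      qed
    qed auto
    then show "P_max W CARD('m) = 1" using L(2)[rule_format, of "CARD('m)"] m(2) by (intro Pmax_eq1[OF L(1)]) simp
  next
    assume nm: "CARD('n) \<le> CARD('m)"
    show "P_max W CARD('n) \<le> hval W"
    proof (rule Pmax_le[OF ne], rule ballI)
      fix lam assume L: "lam \<in> decomps W"
      define \<mu> where "\<mu> f = lam (fmat f)" for f
      have G0: "0 \<le> \<mu> f" for f unfolding \<mu>_def by (rule gen_facts(1)[OF L])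
      have G1: "sum \<mu> UNIV = 1" unfolding \<mu>_def by (rule gen_facts(2)[OF L])
      have Gc: "col_sum W j = (\<Sum>f\<in>UNIV. \<mu> f * real (card {i. f i = j}))" for j
        unfolding \<mu>_def by (rule gen_facts(3)[OF L])
      have Gs: "{i. f i = j} \<subseteq> {i. W $ i $ j \<noteq> 0}" if "\<mu> f \<noteq> 0" for f j
        using that unfolding \<mu>_def by (rule gen_facts(4)[OF L])
      have Gr: "P_rank lam r = sum \<mu> {f. rank (fmat f) = r}" for r
        unfolding \<mu>_def by (rule gen_facts(5)[OF L])
      define P where "P = sum \<mu> {f. surj f}"
      have PP: "P_rank lam CARD('n) = P"
        unfolding P_def Gr by (simp add: rank_surj)
      have P1: "P \<le> 1" using Prank_le1[OF L, of "CARD('n)"] unfolding PP .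
      have Pc: "P \<le> col_sum W j" for j
      proof -
        have "P = (\<Sum>f\<in>UNIV. if surj f then \<mu> f else 0)" unfolding P_def sum_filter_univ ..
        also have "\<dots> \<le> (\<Sum>f\<in>UNIV. \<mu> f * real (card {i. f i = j}))"
        proof (rule sum_mono)
          fix f
          show "(if surj f then \<mu> f else 0) \<le> \<mu> f * real (card {i. f i = j})"
          proof (cases "surj f")
            case True
            then obtain i where "f i = j" by (metis surjD)
            then have "{i. f i = j} \<noteq> {}" by auto
            then have "1 \<le> real (card {i. f i = j})" by (simp add: Suc_le_eq card_gt_0_iff)
            moreover have m0: "0 \<le> \<mu> f" by (rule G0)
            ultimately have "\<mu> f * 1 \<le> \<mu> f * real (card {i. f i = j})" by (rule mult_left_mono)
            then show ?thesis using True by simp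
          next
            case False then show ?thesis using G0[of f] by simp
          qed
        qed
        also have "\<dots> = col_sum W j" by (rule Gc[symmetric])
        finally show ?thesis .
      qed
      have "Min (range (col_sum W)) \<in> range (col_sum W)" by (rule Min_in) auto
      then obtain j1 where j1: "Min (range (col_sum W)) = col_sum W j1" by (metis imageE)
      show "P_rank lam CARD('n) \<le> hval W"
        unfolding hval_def j1 PP using P1 Pc[of j1] by simp
    qed
  next
    assume nm: "CARD('n) \<le> CARD('m)" and h1: "hval W = 1"
    have cge: "1 \<le> col_sum W j" for j
    proof -
      have e: "min 1 (Min (range (col_sum W))) = 1" using h1 unfolding hval_def .
      have "1 \<le> Min (range (col_sum W))"
        using min.cobounded2[of "1::real" "Min (range (col_sum W))"] unfolding e .
      also have "\<dots> \<le> col_sum W j" by (intro Min_le) auto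
      finally show ?thesis .
    qed
    have "feas (\<lambda>_. 1) (\<lambda>_. int CARD('m)) X" using cge cs_le_m
      by (intro feasI) auto
    from core[OF this] obtain \<mu> :: "('m \<Rightarrow> 'n) \<Rightarrow> real" where
      m: "\<forall>f. 0 \<le> \<mu> f" "sum \<mu> UNIV = 1" "\<forall>i j. X i j = sum \<mu> {f. f i = j}"
         "\<forall>f. \<mu> f \<noteq> 0 \<longrightarrow> (\<forall>j. 1 \<le> int (card {i. f i = j}) \<and> int (card {i. f i = j}) \<le> int CARD('m))"
      by blast
    from decI[OF m(1-3)] obtain lam where L: "lam \<in> decomps W"
      "\<forall>r. P_rank lam r = sum \<mu> {f. rank (fmat f) = r}" by blast
    have "sum \<mu> {f. rank (fmat f) = CARD('n)} = sum \<mu> UNIV"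
    proof (rule sum.mono_neutral_left)
      show "\<forall>f\<in>UNIV - {f. rank (fmat f) = CARD('n)}. \<mu> f = 0"
      proof
        fix f :: "'m \<Rightarrow> 'n" assume "f \<in> UNIV - {f. rank (fmat f) = CARD('n)}"
        then have nf: "\<not> surj f" using rank_surj[of f] by simp
        show "\<mu> f = 0"
        proof (rule ccontr)
          assume "\<mu> f \<noteq> 0"
          then have "surj f" using m(4) by (intro surj_from_card) auto
          then show False using nf by simp
        qed
      qed
    qed auto
    then show "P_max W CARD('n) = 1" using L(2)[rule_format, of "CARD('n)"] m(2) by (intro Pmax_eq1[OF L(1)]) simp
  qed
qed


end
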